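(* In the setting of the context, for $\delta\in(0,1)$, with probability at least $1-\delta$, for all $t\in[H]$ and all $(s,a)$ with $d^\mu_t(s,a)>0$, \[ \big|\tilde\sigma_{V^{\rm in}_{t+1}}(s,a)-\sigma_{V^{\rm in}_{t+1}}(s,a)\big|\le6H^2\sqrt{\frac{\log(4HSA/\delta)}{m\,d^\mu_t(s,a)}}+\frac{4H^2\log(4HSA/\delta)}{m\,d^\mu_t(s,a)}. \]
   Context: $\mathcal D$ consists of $m$ i.i.d. episodes from behavior policy $\mu$ in a finite-horizon tabular MDP with $S$ states, $A$ actions, horizon $H$, transitions $P_t$. For each $t\in[H]$, $V^{\rm in}_{t+1}:\mathcal S\to[0,H]$ is fixed (not depending on $\mathcal D$). $d^\mu_t(s,a)=\mathbb P^\mu(s_t=s,a_t=a)$; $\sigma_V(s,a)=\mathrm{Var}_{s'\sim P_t(\cdot|s,a)}[V(s')]$. $n_{t,s,a}$ is the number of episodes in $\mathcal D$ with $(s_t,a_t)=(s,a)$. If $n_{t,s,a}\ge\frac12md^\mu_t(s,a)$ and $n_{t,s,a}>0$, set $\tilde z_t(s,a)=\frac1{n_{t,s,a}}\sum_iV^{\rm in}_{t+1}(s^{(i)}_{t+1})\mathbf 1[s^{(i)}_t=s,a^{(i)}_t=a]$ and $\tilde\sigma_{V^{\rm in}_{t+1}}(s,a)=\frac1{n_{t,s,a}}\sum_i[V^{\rm in}_{t+1}(s^{(i)}_{t+1})]^2\mathbf 1[s^{(i)}_t=s,a^{(i)}_t=a]-\tilde z_t(s,a)^2$; otherwise $\tilde\sigma_{V^{\rm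 in}_{t+1}}(s,a)=\sigma_{V^{\rm in}_{t+1}}(s,a)$. *)

theory Defs
  imports "HOL-Probability.Probability"
begin

text \<open>Finite-horizon tabular MDP with finite state type 's and action type 'a.
  init: initial state distribution; mu t s: behaviour policy at time t;
  P t s a: transition kernel P_t(. | s, a).  An episode is the list of
  transitions (s_t, a_t, s_(t+1)) for t = 1..H (list index t-1).\<close>

type_synonym ('s,'a) episode = "('s \<times> 'a \<times> 's) list"

fun traj_from :: "(nat \<Rightarrow> 's \<Rightarrow> 'a pmf) \<Rightarrow> (nat \<Rightarrow> 's \<Rightarrow> 'a \<Rightarrow> 's pmf)
    \<Rightarrow> nat \<Rightarrow> nat \<Rightarrow> 's \<Rightarrow> ('s,'a) episode pmf" where
  "traj_from mu P t 0 s = return_pmf []"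
| "traj_from mu P t (Suc k) s =
     bind_pmf (mu t s) (\<lambda>a. bind_pmf (P t s a) (\<lambda>s'.
       map_pmf (\<lambda>rest. (s, a, s') # rest) (traj_from mu P (Suc t) k s')))"

definition episode_pmf :: "'s pmf \<Rightarrow> (nat \<Rightarrow> 's \<Rightarrow> 'a pmf) \<Rightarrow> (nat \<Rightarrow> 's \<Rightarrow> 'a \<Rightarrow> 's pmf)
    \<Rightarrow> nat \<Rightarrow> ('s,'a) episode pmf" where
  "episode_pmf init mu P H = bind_pmf init (traj_from mu P 1 H)"

definition dataset_pmf :: "'s pmf \<Rightarrow> (nat \<Rightarrow> 's \<Rightarrow> 'a pmf) \<Rightarrow> (nat \<Rightarrow> 's \<Rightarrow> 'a \<Rightarrow> 's pmf)
    \<Rightarrow> nat \<Rightarrow> nat \<Rightarrow> (nat \<Rightarrow> ('s,'a) episode) pmf" where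
  "dataset_pmf init mu P H m = Pi_pmf {..<m} [] (\<lambda>_. episode_pmf init mu P H)"

definition st :: "('s,'a) episode \<Rightarrow> nat \<Rightarrow> 's" where "st e t = fst (e ! (t - 1))"
definition act :: "('s,'a) episode \<Rightarrow> nat \<Rightarrow> 'a" where "act e t = fst (snd (e ! (t - 1)))"
definition nxt :: "('s,'a) episode \<Rightarrow> nat \<Rightarrow> 's" where "nxt e t = snd (snd (e ! (t - 1)))"

definition occ :: "'s pmf \<Rightarrow> (nat \<Rightarrow> 's \<Rightarrow> 'a pmf) \<Rightarrow> (nat \<Rightarrow> 's \<Rightarrow> 'a \<Rightarrow> 's pmf)
    \<Rightarrow> nat \<Rightarrow> nat \<Rightarrow> 's \<Rightarrow> 'a \<Rightarrow> real" where
  "occ init mu P H t s a =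
     measure_pmf.prob (episode_pmf init mu P H) {e. st e t = s \<and> act e t = a}"

definition visits :: "(nat \<Rightarrow> ('s,'a) episode) \<Rightarrow> nat \<Rightarrow> nat \<Rightarrow> 's \<Rightarrow> 'a \<Rightarrow> nat" where
  "visits D m t s a = card {i\<in>{..<m}. st (D i) t = s \<and> act (D i) t = a}"

definition sigmaV :: "(nat \<Rightarrow> 's \<Rightarrow> 'a \<Rightarrow> 's pmf) \<Rightarrow> nat \<Rightarrow> ('s \<Rightarrow> real) \<Rightarrow> 's \<Rightarrow> 'a \<Rightarrow> real" where
  "sigmaV P t V s a = measure_pmf.variance (P t s a) V"

definition sigma_tilde :: "'s pmf \<Rightarrow> (nat \<Rightarrow> 's \<Rightarrow> 'a pmf) \<Rightarrow> (nat \<Rightarrow> 's \<Rightarrow> 'a \<Rightarrow> 's pmf)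
    \<Rightarrow> nat \<Rightarrow> (nat \<Rightarrow> ('s,'a) episode) \<Rightarrow> nat \<Rightarrow> nat \<Rightarrow> ('s \<Rightarrow> real) \<Rightarrow> 's \<Rightarrow> 'a \<Rightarrow> real" where
  "sigma_tilde init mu P H D m t V s a =
     (let n = visits D m t s a;
          I = {i\<in>{..<m}. st (D i) t = s \<and> act (D i) t = a}
      in if real n \<ge> 1/2 * real m * occ init mu P H t s a \<and> n > 0 then
           (let z = (\<Sum>i\<in>I. V (nxt (D i) t)) / real n
            in (\<Sum>i\<in>I. (V (nxt (D i) t))\<^sup>2) / real n - z\<^sup>2)
         else sigmaV P t V s a)"

end

theory Submission
  imports Defs
begin

definition Kt :: "(nat \<Rightarrow> 's \<Rightarrow> 'a pmf) \<Rightarrow> (nat \<Rightarrow> 's \<Rightarrow> 'a \<Rightarrow> 's pmf) \<Rightarrow> nat \<Rightarrow> 's \<Rightarrow> ('s \<times> 'a \<times> 's) pmf" where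
  "Kt mu P t s = bind_pmf (mu t s) (\<lambda>a. map_pmf (\<lambda>s'. (s,a,s')) (P t s a))"

lemma traj_nth:
  "i < k \<Longrightarrow> \<exists>Q. map_pmf (\<lambda>e. e ! i) (traj_from mu P t0 k s0) = bind_pmf Q (Kt mu P (t0 + i))"
proof (induction i arbitrary: t0 k s0)
  case 0
  then obtain k' where k: "k = Suc k'" by (cases k) auto
  show ?case
    by (rule exI[of _ "return_pmf s0"])
       (simp add: k Kt_def map_bind_pmf bind_return_pmf map_pmf_comp, simp add: map_pmf_def)
next
  case (Suc i)
  then obtain k' where k: "k = Suc k'" and ik: "i < k'" by (cases k) auto
  have "\<forall>s'. \<exists>Q. map_pmf (\<lambda>e. e ! i) (traj_from mu P (Suc t0) k' s') = bind_pmf Q (Kt mu P (Suc t0 + i))"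
    using Suc.IH ik by blast
  then obtain Q where Q: "\<And>s'. map_pmf (\<lambda>e. e ! i) (traj_from mu P (Suc t0) k' s') = bind_pmf (Q s') (Kt mu P (Suc t0 + i))"
    by metis
  have "map_pmf (\<lambda>e. e ! Suc i) (traj_from mu P t0 k s0)
     = bind_pmf (mu t0 s0) (\<lambda>a. bind_pmf (P t0 s0 a) (\<lambda>s'. map_pmf (\<lambda>e. e ! i) (traj_from mu P (Suc t0) k' s')))"
    by (simp add: k map_bind_pmf map_pmf_comp)
  also have "\<dots> = bind_pmf (bind_pmf (mu t0 s0) (\<lambda>a. bind_pmf (P t0 s0 a) Q)) (Kt mu P (t0 + Suc i))"
    by (simp add: Q bind_assoc_pmf)
  finally show ?case by blast
qed

lemma ep_nth:
  assumes "t \<in> {1..H}"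
  shows "\<exists>Q. map_pmf (\<lambda>e. e ! (t - 1)) (episode_pmf init mu P H) = bind_pmf Q (Kt mu P t)"
proof -
  have tt: "1 + (t - 1) = t" "t - 1 < H" using assms by auto
  have "\<forall>s0. \<exists>Q. map_pmf (\<lambda>e. e ! (t - 1)) (traj_from mu P 1 H s0) = bind_pmf Q (Kt mu P t)"
    using traj_nth[OF tt(2), of mu P 1] unfolding tt(1) by blast
  then obtain Q where Q: "\<And>s0. map_pmf (\<lambda>e. e ! (t - 1)) (traj_from mu P 1 H s0) = bind_pmf (Q s0) (Kt mu P t)"
    by metis
  show ?thesis
    unfolding episode_pmf_def map_bind_pmf Q bind_assoc_pmf[symmetric] by blast
qed

lemma exp_fin: "measure_pmf.expectation (p::'x::finite pmf) f = (\<Sum>x\<in>UNIV. pmf p x * f x)"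
  by (subst integral_measure_pmf_real[of UNIV]) (auto simp: mult.commute)

lemma exp_bind_fin:
  fixes M :: "'x::finite pmf" and N :: "'x \<Rightarrow> 'y::finite pmf" and f :: "'y \<Rightarrow> real"
  shows "measure_pmf.expectation (bind_pmf M N) f = (\<Sum>x\<in>UNIV. pmf M x * measure_pmf.expectation (N x) f)"
proof -
  have "measure_pmf.expectation (bind_pmf M N) f = (\<Sum>y\<in>UNIV. pmf (bind_pmf M N) y * f y)"
    by (rule exp_fin)
  also have "\<dots> = (\<Sum>y\<in>UNIV. (\<Sum>x\<in>UNIV. pmf M x * pmf (N x) y) * f y)"
    by (simp only: pmf_bind exp_fin)
  also have "\<dots> = (\<Sum>y\<in>UNIV. \<Sum>x\<in>UNIV. pmf M x * (pmf (N x) y * f y))"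
    by (simp only: sum_distrib_right mult.assoc)
  also have "\<dots> = (\<Sum>x\<in>UNIV. \<Sum>y\<in>UNIV. pmf M x * (pmf (N x) y * f y))"
    by (rule sum.swap)
  also have "\<dots> = (\<Sum>x\<in>UNIV. pmf M x * (\<Sum>y\<in>UNIV. pmf (N x) y * f y))"
    by (simp only: sum_distrib_left)
  finally show ?thesis by (simp only: exp_fin)
qed

lemma exp_Kt:
  fixes F :: "'s::finite \<times> 'a::finite \<times> 's \<Rightarrow> real"
  shows "measure_pmf.expectation (Kt mu P t s) F = (\<Sum>a\<in>UNIV. pmf (mu t s) a * measure_pmf.expectation (P t s a) (\<lambda>z. F (s,a,z)))"
  unfolding Kt_def exp_bind_fin integral_map_pmf ..

lemma exp_ep_F:
  fixes F :: "'s::finite \<times> 'a::finite \<times> 's \<Rightarrow> real"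
  assumes Q: "map_pmf (\<lambda>e. e ! (t - 1)) (episode_pmf init mu P H) = bind_pmf Q (Kt mu P t)"
  shows "measure_pmf.expectation (episode_pmf init mu P H) (\<lambda>e. F (e ! (t - 1)))
     = (\<Sum>x\<in>UNIV. pmf Q x * (\<Sum>b\<in>UNIV. pmf (mu t x) b * measure_pmf.expectation (P t x b) (\<lambda>z. F (x,b,z))))"
proof -
  have "measure_pmf.expectation (episode_pmf init mu P H) (\<lambda>e. F (e ! (t - 1)))
      = measure_pmf.expectation (map_pmf (\<lambda>e. e ! (t - 1)) (episode_pmf init mu P H)) F"
    by simp
  also have "\<dots> = measure_pmf.expectation (bind_pmf Q (Kt mu P t)) F" by (simp only: Q)
  finally show ?thesis by (simp only: exp_bind_fin exp_Kt)
qed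

lemma collapse:
  fixes Q :: "'s::finite pmf" and M :: "'s \<Rightarrow> 'a::finite pmf" and R :: "'s \<Rightarrow> 'a \<Rightarrow> 's pmf"
  shows "(\<Sum>x\<in>UNIV. pmf Q x * (\<Sum>b\<in>UNIV. pmf (M x) b * measure_pmf.expectation (R x b)
            (\<lambda>z. if x = s \<and> b = a then g z else 0)))
       = pmf Q s * pmf (M s) a * measure_pmf.expectation (R s a) g"
proof -
  have "\<And>x b. measure_pmf.expectation (R x b) (\<lambda>z. if x = s \<and> b = a then g z else 0)
      = (if x = s \<and> b = a then measure_pmf.expectation (R x b) g else 0)" by auto
  then have "\<And>x b. pmf (M x) b * measure_pmf.expectation (R x b) (\<lambda>z. if x = s \<and> b = a then g z else 0)
      = (if b = a then (if x = s then pmf (M s) a * measure_pmf.expectation (R s a) g else 0) else 0)" by auto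
  then have H: "\<And>x. (\<Sum>b\<in>UNIV. pmf (M x) b * measure_pmf.expectation (R x b) (\<lambda>z. if x = s \<and> b = a then g z else 0))
     = (if x = s then pmf (M s) a * measure_pmf.expectation (R s a) g else 0)"
    by (simp add: sum.delta)
  have H2: "\<And>x. pmf Q x * (if x = s then pmf (M s) a * measure_pmf.expectation (R s a) g else 0)
     = (if x = s then pmf Q s * pmf (M s) a * measure_pmf.expectation (R s a) g else 0)" by simp
  show ?thesis unfolding H H2 by simp
qed

lemma ep_mean:
  fixes init :: "'s::finite pmf" and mu :: "nat \<Rightarrow> 's \<Rightarrow> 'a::finite pmf"
  assumes "t \<in> {1..H}"
  shows "measure_pmf.expectation (episode_pmf init mu P H)
           (\<lambda>e. if st e t = s \<and> act e t = a then g (nxt e t) else 0)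
         = occ init mu P H t s a * measure_pmf.expectation (P t s a) g"
proof -
  obtain Q where Q: "map_pmf (\<lambda>e. e ! (t - 1)) (episode_pmf init mu P H) = bind_pmf Q (Kt mu P t)"
    using ep_nth[OF assms] by blast
  have gen: "measure_pmf.expectation (episode_pmf init mu P H)
           (\<lambda>e. if st e t = s \<and> act e t = a then h (nxt e t) else 0)
         = pmf Q s * pmf (mu t s) a * measure_pmf.expectation (P t s a) h" for h :: "'s \<Rightarrow> real"
  proof -
    have "(\<lambda>e. if st e t = s \<and> act e t = a then h (nxt e t) else 0)
        = (\<lambda>e. (\<lambda>(x,b,z). if x = s \<and> b = a then h z else 0) (e ! (t - 1)))"
      by (auto simp: st_def act_def nxt_def split: prod.splits)
    then show ?thesis
      using exp_ep_F[OF Q, of "\<lambda>(x,b,z). if x = s \<and> b = a then h z else 0"] collapse[of Q "mu t" "P t" s a h]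
      by simp
  qed
  have "occ init mu P H t s a = measure_pmf.expectation (episode_pmf init mu P H)
           (indicator {e. st e t = s \<and> act e t = a})"
    unfolding occ_def by (simp add: measure_pmf.emeasure_finite)
  also have "indicator {e. st e t = s \<and> act e t = a} = (\<lambda>e. if st e t = s \<and> act e t = a then (\<lambda>_. 1::real) (nxt e t) else 0)"
    by (auto simp: indicator_def)
  finally have "occ init mu P H t s a = pmf Q s * pmf (mu t s) a"
    using gen[of "\<lambda>_. 1"] by simp
  then show ?thesis using gen[of g] by simp
qed

lemma exp_le_quad:
  fixes y :: real assumes "y \<le> 1" shows "exp y \<le> 1 + y + y\<^sup>2"
proof (cases "0 \<le> y")
  case True then show ?thesis using exp_bound assms by blast
next
  case False
  have "1 - y \<le> exp (- y)" using exp_ge_add_one_self[of "-y"] by simp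
  then have "exp y \<le> 1 / (1 - y)" using False
    by (simp add: exp_minus field_simps)
  also have "1 / (1 - y) \<le> 1 + y + y\<^sup>2"
  proof -
    have e: "(1 + y + y\<^sup>2) * (1 - y) = 1 - y ^ 3" by (simp add: algebra_simps power2_eq_square power3_eq_cube)
    have "y ^ 3 < 0" using False by (simp add: power_less_zero_eq)
    then have "1 \<le> (1 + y + y\<^sup>2) * (1 - y)" unfolding e by simp
    then show ?thesis using False by (simp add: field_simps)
  qed
  finally show ?thesis .
qed

lemma integrable_bdd_pmf:
  fixes f :: "'b \<Rightarrow> real"
  assumes "\<And>x. \<bar>f x\<bar> \<le> B"
  shows "integrable (measure_pmf M) f"
  by (rule measure_pmf.integrable_const_bound[where B=B]) (use assms in auto)

lemma mgf_bound:
  fixes E :: "'b pmf" and \<phi> :: "'b \<Rightarrow> real"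
  assumes bnd: "\<And>x. \<bar>\<phi> x\<bar> \<le> b" and mean: "measure_pmf.expectation E \<phi> = 0"
    and var: "measure_pmf.expectation E (\<lambda>x. (\<phi> x)\<^sup>2) \<le> v"
    and l: "0 \<le> l" "l * b \<le> 1"
  shows "measure_pmf.expectation E (\<lambda>x. exp (l * \<phi> x)) \<le> exp (l\<^sup>2 * v)"
proof -
  have b0: "0 \<le> b" using bnd[of undefined] by linarith
  have i1: "integrable (measure_pmf E) \<phi>" by (rule integrable_bdd_pmf[OF bnd])
  have i2: "integrable (measure_pmf E) (\<lambda>x. (\<phi> x)\<^sup>2)"
  proof (rule integrable_bdd_pmf[where B="b\<^sup>2"])
    fix x show "\<bar>(\<phi> x)\<^sup>2\<bar> \<le> b\<^sup>2" using bnd[of x] by (metis abs_ge_zero power2_abs power_mono abs_power2)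
  qed
  have i3: "integrable (measure_pmf E) (\<lambda>x. exp (l * \<phi> x))"
  proof (rule integrable_bdd_pmf[where B="exp (l * b)"])
    fix x have "l * \<phi> x \<le> l * b" using bnd[of x] l by (intro mult_left_mono) auto
    then show "\<bar>exp (l * \<phi> x)\<bar> \<le> exp (l * b)" by simp
  qed
  have "measure_pmf.expectation E (\<lambda>x. exp (l * \<phi> x))
      \<le> measure_pmf.expectation E (\<lambda>x. 1 + l * \<phi> x + l\<^sup>2 * (\<phi> x)\<^sup>2)"
  proof (rule integral_mono[OF i3])
    show "integrable (measure_pmf E) (\<lambda>x. 1 + l * \<phi> x + l\<^sup>2 * (\<phi> x)\<^sup>2)"
      using i1 i2 by auto
    fix x
    have "l * \<phi> x \<le> l * b" using bnd[of x] l by (intro mult_left_mono) auto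
    then have "l * \<phi> x \<le> 1" using l by linarith
    from exp_le_quad[OF this] show "exp (l * \<phi> x) \<le> 1 + l * \<phi> x + l\<^sup>2 * (\<phi> x)\<^sup>2"
      by (simp add: power_mult_distrib)
  qed
  also have "\<dots> = 1 + l * measure_pmf.expectation E \<phi> + l\<^sup>2 * measure_pmf.expectation E (\<lambda>x. (\<phi> x)\<^sup>2)"
    using i1 i2 by (simp add: Bochner_Integration.integral_add)
  also have "\<dots> \<le> 1 + l\<^sup>2 * v" using mean var by (simp add: mult_left_mono)
  also have "\<dots> \<le> exp (l\<^sup>2 * v)" by (rule exp_ge_add_one_self)
  finally show ?thesis .
qed

lemma chernoff_l:
  fixes E :: "'b pmf" and \<phi> :: "'b \<Rightarrow> real"
  assumes bnd: "\<And>x. \<bar>\<phi> x\<bar> \<le> b" and mean: "measure_pmf.expectation E \<phi> = 0"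
    and var: "measure_pmf.expectation E (\<lambda>x. (\<phi> x)\<^sup>2) \<le> v"
    and l: "0 < l" "l * b \<le> 1"
  shows "measure_pmf.prob (Pi_pmf {..<m} dflt (\<lambda>_. E)) {D. \<epsilon> \<le> (\<Sum>i<m. \<phi> (D i))}
          \<le> exp (- l * \<epsilon> + real m * l\<^sup>2 * v)"
proof -
  let ?M = "Pi_pmf {..<m} dflt (\<lambda>_. E)"
  let ?A = "{D. \<epsilon> \<le> (\<Sum>i<m. \<phi> (D i))}"
  have ie: "integrable (measure_pmf E) (\<lambda>x. exp (l * \<phi> x))"
  proof (rule integrable_bdd_pmf[where B="exp (l * b)"])
    fix x have "l * \<phi> x \<le> l * b" using bnd[of x] l by (intro mult_left_mono) auto
    then show "\<bar>exp (l * \<phi> x)\<bar> \<le> exp (l * b)" by simp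
  qed
  have ip: "integrable (measure_pmf ?M) (\<lambda>D. \<Prod>i<m. exp (l * \<phi> (D i)))"
    by (rule integrable_prod_Pi_pmf) (use ie in auto)
  have "measure_pmf.prob ?M ?A = measure_pmf.expectation ?M (indicator ?A)"
    by (simp add: measure_pmf.emeasure_finite)
  also have "\<dots> \<le> measure_pmf.expectation ?M (\<lambda>D. exp (- l * \<epsilon>) * (\<Prod>i<m. exp (l * \<phi> (D i))))"
  proof (rule integral_mono)
    show "integrable (measure_pmf ?M) (indicator ?A :: _ \<Rightarrow> real)"
      by (rule integrable_bdd_pmf[where B=1]) (auto simp: indicator_def)
    show "integrable (measure_pmf ?M) (\<lambda>D. exp (- l * \<epsilon>) * (\<Prod>i<m. exp (l * \<phi> (D i))))"
      using ip by simp
    fix D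
    have eq: "exp (- l * \<epsilon>) * (\<Prod>i<m. exp (l * \<phi> (D i))) = exp (l * ((\<Sum>i<m. \<phi> (D i)) - \<epsilon>))"
      by (simp add: exp_sum sum_distrib_left algebra_simps exp_diff exp_minus field_simps)
    show "indicator ?A D \<le> exp (- l * \<epsilon>) * (\<Prod>i<m. exp (l * \<phi> (D i)))"
      unfolding eq using l by (auto simp: indicator_def)
  qed
  also have "\<dots> = exp (- l * \<epsilon>) * measure_pmf.expectation ?M (\<lambda>D. \<Prod>i<m. exp (l * \<phi> (D i)))"
    by simp
  also have "measure_pmf.expectation ?M (\<lambda>D. \<Prod>i<m. exp (l * \<phi> (D i)))
      = (\<Prod>i<m. measure_pmf.expectation E (\<lambda>x. exp (l * \<phi> x)))"
    by (rule expectation_prod_Pi_pmf) (use ie in auto)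
  also have "\<dots> = (measure_pmf.expectation E (\<lambda>x. exp (l * \<phi> x))) ^ m" by simp
  also have "\<dots> \<le> (exp (l\<^sup>2 * v)) ^ m"
    by (rule power_mono[OF mgf_bound[OF bnd mean var _ l(2)]]) (use l in auto)
  also have "(exp (l\<^sup>2 * v)) ^ m = exp (real m * (l\<^sup>2 * v))" by (simp add: exp_of_nat_mult)
  finally show ?thesis by (simp add: exp_add[symmetric] mult.assoc)
qed

lemma chernoff:
  fixes E :: "'b pmf" and \<phi> :: "'b \<Rightarrow> real"
  assumes b: "0 < b" and bnd: "\<And>x. \<bar>\<phi> x\<bar> \<le> b" and mean: "measure_pmf.expectation E \<phi> = 0"
    and var: "measure_pmf.expectation E (\<lambda>x. (\<phi> x)\<^sup>2) \<le> v"
    and L: "0 < L"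
  shows "measure_pmf.prob (Pi_pmf {..<m} dflt (\<lambda>_. E))
           {D. 2 * sqrt (real m * v * L) + 2 * b * L \<le> (\<Sum>i<m. \<phi> (D i))} \<le> exp (- L)"
proof -
  let ?e = "2 * sqrt (real m * v * L) + 2 * b * L"
  have v0: "0 \<le> v" using var by (metis integral_nonneg_AE AE_I2 zero_le_power2 order_trans)
  have "\<exists>l. 0 < l \<and> l * b \<le> 1 \<and> - l * ?e + real m * l\<^sup>2 * v \<le> - L"
  proof (cases "real m * v \<le> L * b\<^sup>2")
    case True
    have sq0: "0 \<le> sqrt (real m * v * L)" using v0 L by simp
    have h0: "0 \<le> 2 * sqrt (real m * v * L) / b" using sq0 b by (simp add: divide_nonneg_pos)
    have "- (1/b) * ?e + real m * (1/b)\<^sup>2 * v = - 2 * sqrt (real m * v * L) / b - 2 * L + real m * v / b\<^sup>2"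
      using b by (simp add: field_simps power2_eq_square)
    also have "\<dots> \<le> - 2 * L + real m * v / b\<^sup>2" using h0 by simp
    also have "real m * v / b\<^sup>2 \<le> L" using True b by (simp add: field_simps)
    finally show ?thesis using b by (intro exI[of _ "1/b"]) auto
  next
    case False
    have mv: "0 < real m * v" using False b L
      by (smt (verit) mult_nonneg_nonneg zero_le_power2)
    have mp: "0 < m" "v \<noteq> 0" using mv v0 by (auto simp: zero_less_mult_iff)
    define l where "l = sqrt (L / (real m * v))"
    have l0: "0 < l" using mv L by (simp add: l_def)
    have l2: "l\<^sup>2 = L / (real m * v)" using mv L by (simp add: l_def)
    have "(l * b)\<^sup>2 \<le> 1" using False mv by (simp add: power_mult_distrib l2 field_simps)
    then have lb: "l * b \<le> 1" using power2_le_imp_le[of "l * b" 1] by simp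
    have "l * sqrt (real m * v * L) = L"
    proof -
      show ?thesis using mp using mv L by (simp add: l_def real_sqrt_mult[symmetric] field_simps)
    qed
    then have "- l * ?e + real m * l\<^sup>2 * v = - 2 * L - 2 * l * b * L + L"
      using mv mp by (simp add: l2 algebra_simps)
    also have "\<dots> \<le> - L" using l0 b L by (simp add: mult_pos_pos)
    finally show ?thesis using l0 lb by blast
  qed
  then obtain l where l: "0 < l" "l * b \<le> 1" "- l * ?e + real m * l\<^sup>2 * v \<le> - L" by blast
  have "measure_pmf.prob (Pi_pmf {..<m} dflt (\<lambda>_. E)) {D. ?e \<le> (\<Sum>i<m. \<phi> (D i))}
          \<le> exp (- l * ?e + real m * l\<^sup>2 * v)"
    by (rule chernoff_l[OF bnd mean var l(1,2)])
  also have "\<dots> \<le> exp (- L)" using l(3) by simp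
  finally show ?thesis .
qed

lemma final_arith:
  fixes n u H L S1 S2 :: real
  assumes u: "0 < u" and n: "0 < n" "u / 2 \<le> n" and H: "0 \<le> H" and L: "0 \<le> L"
    and b1: "\<bar>S1\<bar> \<le> n * H" and b2: "\<bar>S2\<bar> \<le> n * H\<^sup>2"
    and e1: "\<bar>S1\<bar> \<le> H * sqrt (u * L) + 2 * H * L"
    and e2: "\<bar>S2\<bar> \<le> H\<^sup>2 * sqrt (u * L) + 2 * H\<^sup>2 * L"
  shows "\<bar>S2 / n - (S1 / n)\<^sup>2\<bar> \<le> 6 * H\<^sup>2 * sqrt (L / u) + 4 * H\<^sup>2 * L / u"
proof -
  define X where "X = sqrt (L / u)"
  have X0: "0 \<le> X" using L u by (simp add: X_def)
  have LX: "L = u * X\<^sup>2" using L u by (simp add: X_def)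
  have sq: "sqrt (u * L) = u * X"
  proof -
    have "u * L = u\<^sup>2 * (L / u)" using u by (simp add: power2_eq_square)
    then have "sqrt (u * L) = sqrt (u\<^sup>2) * sqrt (L / u)" by (simp only: real_sqrt_mult)
    then show ?thesis using u by (simp add: X_def)
  qed
  have rhs: "6 * H\<^sup>2 * sqrt (L / u) + 4 * H\<^sup>2 * L / u = 6 * H\<^sup>2 * X + 4 * H\<^sup>2 * X\<^sup>2"
    using u X0 by (simp add: X_def[symmetric] LX)
  define a1 where "a1 = \<bar>S1\<bar> / n"
  define a2 where "a2 = \<bar>S2\<bar> / n"
  have a10: "0 \<le> a1" and a20: "0 \<le> a2" using n by (auto simp: a1_def a2_def)
  have a1H: "a1 \<le> H" using b1 n by (simp add: a1_def field_simps)
  have a2H: "a2 \<le> H\<^sup>2" using b2 n by (simp add: a2_def field_simps)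
  have inv: "1 / n \<le> 2 / u" using n u by (simp add: field_simps)
  have a1e: "a1 \<le> 2 * H * X + 4 * H * X\<^sup>2"
  proof -
    have "\<bar>S1\<bar> \<le> H * (u * X) + 2 * H * (u * X\<^sup>2)" using e1 by (simp add: sq LX[symmetric])
    then have "a1 \<le> (H * (u * X) + 2 * H * (u * X\<^sup>2)) * (1 / n)" using n by (simp add: a1_def field_simps)
    also have "\<dots> \<le> (H * (u * X) + 2 * H * (u * X\<^sup>2)) * (2 / u)"
      by (rule mult_left_mono[OF inv]) (use H u X0 in auto)
    also have "\<dots> = 2 * H * X + 4 * H * X\<^sup>2" using u by (simp add: field_simps)
    finally show ?thesis .
  qed
  have a2e: "a2 \<le> 2 * H\<^sup>2 * X + 4 * H\<^sup>2 * X\<^sup>2"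
  proof -
    have "\<bar>S2\<bar> \<le> H\<^sup>2 * (u * X) + 2 * H\<^sup>2 * (u * X\<^sup>2)" using e2 by (simp add: sq LX[symmetric])
    then have "a2 \<le> (H\<^sup>2 * (u * X) + 2 * H\<^sup>2 * (u * X\<^sup>2)) * (1 / n)" using n by (simp add: a2_def field_simps)
    also have "\<dots> \<le> (H\<^sup>2 * (u * X) + 2 * H\<^sup>2 * (u * X\<^sup>2)) * (2 / u)"
      by (rule mult_left_mono[OF inv]) (use H u X0 in auto)
    also have "\<dots> = 2 * H\<^sup>2 * X + 4 * H\<^sup>2 * X\<^sup>2" using u by (simp add: field_simps)
    finally show ?thesis .
  qed
  have t1: "\<bar>S2 / n - (S1 / n)\<^sup>2\<bar> \<le> \<bar>S2 / n\<bar> + \<bar>(S1 / n)\<^sup>2\<bar>" by (rule abs_triangle_ineq4)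
  have t2: "\<bar>S2 / n\<bar> = a2" using n by (simp add: a2_def)
  have t3: "\<bar>(S1 / n)\<^sup>2\<bar> = a1\<^sup>2" using n by (simp add: a1_def power_divide)
  have "\<bar>S2 / n - (S1 / n)\<^sup>2\<bar> \<le> a2 + a1\<^sup>2" using t1 unfolding t2 t3 .
  also have "\<dots> \<le> 6 * H\<^sup>2 * X + 4 * H\<^sup>2 * X\<^sup>2"
  proof (cases "1/3 \<le> X")
    case True
    have "a1\<^sup>2 \<le> H\<^sup>2" using a1H a10 by (simp add: power_mono)
    then have "a2 + a1\<^sup>2 \<le> 2 * H\<^sup>2" using a2H by simp
    also have "\<dots> \<le> 6 * H\<^sup>2 * X" using True by (simp add: mult_left_mono[of "1/3" X "6 * H\<^sup>2", simplified])
    also have "\<dots> \<le> 6 * H\<^sup>2 * X + 4 * H\<^sup>2 * X\<^sup>2" by simp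
    finally show ?thesis .
  next
    case False
    have "a1\<^sup>2 \<le> H * a1" using a1H a10 by (simp add: power2_eq_square mult_right_mono)
    also have "\<dots> \<le> H * (2 * H * X + 4 * H * X\<^sup>2)" by (rule mult_left_mono[OF a1e H])
    finally have "a2 + a1\<^sup>2 \<le> 4 * H\<^sup>2 * X + 8 * H\<^sup>2 * X\<^sup>2" using a2e by (simp add: algebra_simps power2_eq_square)
    also have "\<dots> \<le> 6 * H\<^sup>2 * X + 4 * H\<^sup>2 * X\<^sup>2"
    proof -
      have "X\<^sup>2 \<le> X / 2" using mult_left_mono[of "2 * X" 1 X] False X0 by (simp add: power2_eq_square algebra_simps)
      then have "H\<^sup>2 * X\<^sup>2 \<le> H\<^sup>2 * (X / 2)" by (rule mult_left_mono) simp
      then show ?thesis by (simp add: algebra_simps)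
    qed
    finally show ?thesis .
  qed
  finally show ?thesis using rhs by simp
qed

lemma popoviciu:
  fixes p :: "'s::finite pmf" and g :: "'s \<Rightarrow> real"
  assumes g0: "\<And>z. 0 \<le> g z" and gB: "\<And>z. g z \<le> B"
  shows "measure_pmf.expectation p (\<lambda>z. (g z - measure_pmf.expectation p g)\<^sup>2) \<le> B\<^sup>2 / 4"
    and "0 \<le> measure_pmf.expectation p g" and "measure_pmf.expectation p g \<le> B"
proof -
  define c where "c = measure_pmf.expectation p g"
  have s1: "(\<Sum>x\<in>UNIV. pmf p x) = 1" by (rule sum_pmf_eq_1) auto
  have c: "c = (\<Sum>x\<in>UNIV. pmf p x * g x)" by (simp add: c_def exp_fin)
  have "c \<le> (\<Sum>x\<in>UNIV. pmf p x * B)" unfolding c by (rule sum_mono) (simp add: mult_left_mono gB)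
  also have "\<dots> = B" using s1 by (simp add: sum_distrib_right[symmetric])
  finally have cB: "c \<le> B" .
  have c0: "0 \<le> c" unfolding c by (rule sum_nonneg) (simp add: g0)
  have "measure_pmf.expectation p (\<lambda>z. (g z - c)\<^sup>2) = (\<Sum>x\<in>UNIV. pmf p x * (g x - c)\<^sup>2)" by (simp add: exp_fin)
  also have "\<dots> = (\<Sum>x\<in>UNIV. pmf p x * (g x)\<^sup>2 - 2 * c * (pmf p x * g x) + c\<^sup>2 * pmf p x)"
    by (rule sum.cong) (auto simp: power2_eq_square algebra_simps)
  also have "\<dots> = (\<Sum>x\<in>UNIV. pmf p x * (g x)\<^sup>2) - 2 * c * c + c\<^sup>2"
    by (simp add: sum.distrib sum_subtractf sum_distrib_left[symmetric] s1 c[symmetric])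
  also have "(\<Sum>x\<in>UNIV. pmf p x * (g x)\<^sup>2) \<le> (\<Sum>x\<in>UNIV. B * (pmf p x * g x))"
  proof (rule sum_mono)
    fix x
    have "pmf p x * g x * g x \<le> pmf p x * g x * B"
      by (rule mult_left_mono[OF gB]) (simp add: g0)
    then show "pmf p x * (g x)\<^sup>2 \<le> B * (pmf p x * g x)" by (simp add: power2_eq_square algebra_simps)
  qed
  also have "\<dots> = B * c" by (simp add: c sum_distrib_left)
  finally have "measure_pmf.expectation p (\<lambda>z. (g z - c)\<^sup>2) \<le> B * c - 2 * c * c + c\<^sup>2" by simp
  also have "\<dots> \<le> B\<^sup>2 / 4" using zero_le_power2[of "B - 2 * c"] by (simp add: power2_eq_square algebra_simps)
  finally show "measure_pmf.expectation p (\<lambda>z. (g z - measure_pmf.expectation p g)\<^sup>2) \<le> B\<^sup>2 / 4"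
    by (simp add: c_def)
  show "0 \<le> measure_pmf.expectation p g" "measure_pmf.expectation p g \<le> B" using c0 cB c_def by auto
qed

definition phi :: "nat \<Rightarrow> 's \<Rightarrow> 'a \<Rightarrow> ('s \<Rightarrow> real) \<Rightarrow> real \<Rightarrow> ('s,'a) episode \<Rightarrow> real" where
  "phi t s a g c e = (if st e t = s \<and> act e t = a then g (nxt e t) - c else 0)"

lemma moments:
  fixes init :: "'s::finite pmf" and mu :: "nat \<Rightarrow> 's \<Rightarrow> 'a::finite pmf" and g :: "'s \<Rightarrow> real"
  assumes t: "t \<in> {1..H}" and g0: "\<And>z. 0 \<le> g z" and gB: "\<And>z. g z \<le> B"
  shows "\<And>e. \<bar>phi t s a g (measure_pmf.expectation (P t s a) g) e\<bar> \<le> B"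
    and "measure_pmf.expectation (episode_pmf init mu P H) (phi t s a g (measure_pmf.expectation (P t s a) g)) = 0"
    and "measure_pmf.expectation (episode_pmf init mu P H) (\<lambda>e. (phi t s a g (measure_pmf.expectation (P t s a) g) e)\<^sup>2)
           \<le> occ init mu P H t s a * B\<^sup>2 / 4"
proof -
  define c where "c = measure_pmf.expectation (P t s a) g"
  have c0: "0 \<le> c" and cB: "c \<le> B" using popoviciu(2,3)[OF g0 gB, of "P t s a"] by (auto simp: c_def)
  show "\<bar>phi t s a g c e\<bar> \<le> B" for e
    using g0[of "nxt e t"] gB[of "nxt e t"] c0 cB by (auto simp: phi_def)
  have ig: "integrable (measure_pmf (P t s a)) g"
    by (rule integrable_bdd_pmf[where B=B]) (use g0 gB in \<open>auto simp: abs_le_iff intro: order_trans\<close>)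
  have "measure_pmf.expectation (episode_pmf init mu P H) (phi t s a g c)
      = occ init mu P H t s a * measure_pmf.expectation (P t s a) (\<lambda>z. g z - c)"
    unfolding phi_def by (rule ep_mean[OF t])
  also have "measure_pmf.expectation (P t s a) (\<lambda>z. g z - c) = 0"
    using ig by (simp add: Bochner_Integration.integral_diff c_def)
  finally show "measure_pmf.expectation (episode_pmf init mu P H) (phi t s a g c) = 0" by simp
  have "(\<lambda>e. (phi t s a g c e)\<^sup>2) = (\<lambda>e. if st e t = s \<and> act e t = a then (\<lambda>z. (g z - c)\<^sup>2) (nxt e t) else 0)"
    by (auto simp: phi_def)
  then have "measure_pmf.expectation (episode_pmf init mu P H) (\<lambda>e. (phi t s a g c e)\<^sup>2)
      = occ init mu P H t s a * measure_pmf.expectation (P t s a) (\<lambda>z. (g z - c)\<^sup>2)"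
    using ep_mean[OF t] by simp
  also have "\<dots> \<le> occ init mu P H t s a * (B\<^sup>2 / 4)"
    by (rule mult_left_mono) (use popoviciu(1)[OF g0 gB, of "P t s a"] in \<open>auto simp: c_def occ_def\<close>)
  finally show "measure_pmf.expectation (episode_pmf init mu P H) (\<lambda>e. (phi t s a g c e)\<^sup>2)
           \<le> occ init mu P H t s a * B\<^sup>2 / 4" by simp
qed

lemma tail2:
  fixes init :: "'s::finite pmf" and mu :: "nat \<Rightarrow> 's \<Rightarrow> 'a::finite pmf" and g :: "'s \<Rightarrow> real"
  assumes t: "t \<in> {1..H}" and g0: "\<And>z. 0 \<le> g z" and gB: "\<And>z. g z \<le> B" and B: "0 < B" and L: "0 < L"
  shows "measure_pmf.prob (dataset_pmf init mu P H m)
     {D. 2 * sqrt (real m * (occ init mu P H t s a * B\<^sup>2 / 4) * L) + 2 * B * L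
          \<le> \<bar>\<Sum>i<m. phi t s a g (measure_pmf.expectation (P t s a) g) (D i)\<bar>} \<le> 2 * exp (- L)"
proof -
  define f where "f = phi t s a g (measure_pmf.expectation (P t s a) g)"
  define v where "v = occ init mu P H t s a * B\<^sup>2 / 4"
  define E where "E = episode_pmf init mu P H"
  define \<epsilon> where "\<epsilon> = 2 * sqrt (real m * v * L) + 2 * B * L"
  have m1: "\<And>e. \<bar>f e\<bar> \<le> B" unfolding f_def by (rule moments(1)[OF t g0 gB])
  have m2: "measure_pmf.expectation E f = 0" unfolding f_def E_def by (rule moments(2)[OF t g0 gB])
  have m3: "measure_pmf.expectation E (\<lambda>e. (f e)\<^sup>2) \<le> v"
    unfolding f_def E_def v_def by (rule moments(3)[OF t g0 gB])
  have n1: "\<And>e. \<bar>- f e\<bar> \<le> B" using m1 by simp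
  have n2: "measure_pmf.expectation E (\<lambda>e. - f e) = 0" using m2 by simp
  have n3: "measure_pmf.expectation E (\<lambda>e. (- f e)\<^sup>2) \<le> v" using m3 by simp
  have sub: "{D. \<epsilon> \<le> \<bar>\<Sum>i<m. f (D i)\<bar>} \<subseteq> {D. \<epsilon> \<le> (\<Sum>i<m. f (D i))} \<union> {D. \<epsilon> \<le> (\<Sum>i<m. - f (D i))}"
    by (auto simp: sum_negf abs_if split: if_splits)
  have "measure_pmf.prob (Pi_pmf {..<m} [] (\<lambda>_. E)) {D. \<epsilon> \<le> \<bar>\<Sum>i<m. f (D i)\<bar>}
      \<le> measure_pmf.prob (Pi_pmf {..<m} [] (\<lambda>_. E)) ({D. \<epsilon> \<le> (\<Sum>i<m. f (D i))} \<union> {D. \<epsilon> \<le> (\<Sum>i<m. - f (D i))})"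
    by (rule measure_pmf.finite_measure_mono[OF sub]) simp
  also have "\<dots> \<le> measure_pmf.prob (Pi_pmf {..<m} [] (\<lambda>_. E)) {D. \<epsilon> \<le> (\<Sum>i<m. f (D i))}
               + measure_pmf.prob (Pi_pmf {..<m} [] (\<lambda>_. E)) {D. \<epsilon> \<le> (\<Sum>i<m. - f (D i))}"
    by (rule measure_Un_le) simp_all
  also have "\<dots> \<le> exp (- L) + exp (- L)"
    by (rule add_mono; unfold \<epsilon>_def; rule chernoff[OF B _ _ _ L]) (use m1 m2 m3 n1 n2 n3 in auto)
  finally show ?thesis by (simp add: dataset_pmf_def f_def v_def E_def \<epsilon>_def)
qed

lemma sqrt_fac:
  fixes m d c L :: real
  assumes "0 \<le> c"
  shows "2 * sqrt (m * (d * c\<^sup>2 / 4) * L) = c * sqrt (m * d * L)"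
proof -
  have "m * (d * c\<^sup>2 / 4) * L = (c / 2)\<^sup>2 * (m * d * L)" by (simp add: power2_eq_square field_simps)
  then have "sqrt (m * (d * c\<^sup>2 / 4) * L) = sqrt ((c / 2)\<^sup>2) * sqrt (m * d * L)" by (simp only: real_sqrt_mult)
  then show ?thesis using assms by simp
qed

lemma determ:
  fixes init :: "'s::finite pmf" and mu :: "nat \<Rightarrow> 's \<Rightarrow> 'a::finite pmf" and V :: "'s \<Rightarrow> real"
  assumes V0: "\<And>z. 0 \<le> V z" and VH: "\<And>z. V z \<le> real H" and L: "0 < L"
    and d: "0 < occ init mu P H t s a"
    and b1: "\<not> (2 * sqrt (real m * (occ init mu P H t s a * (real H)\<^sup>2 / 4) * L) + 2 * real H * L
               \<le> \<bar>\<Sum>i<m. phi t s a V (measure_pmf.expectation (P t s a) V) (D i)\<bar>)"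
    and b2: "\<not> (2 * sqrt (real m * (occ init mu P H t s a * ((real H)\<^sup>2)\<^sup>2 / 4) * L) + 2 * (real H)\<^sup>2 * L
               \<le> \<bar>\<Sum>i<m. phi t s a (\<lambda>z. (V z - measure_pmf.expectation (P t s a) V)\<^sup>2)
                     (measure_pmf.expectation (P t s a) (\<lambda>z. (V z - measure_pmf.expectation (P t s a) V)\<^sup>2)) (D i)\<bar>)"
  shows "\<bar>sigma_tilde init mu P H D m t V s a - sigmaV P t V s a\<bar>
          \<le> 6 * (real H)\<^sup>2 * sqrt (L / (real m * occ init mu P H t s a))
            + 4 * (real H)\<^sup>2 * L / (real m * occ init mu P H t s a)"
proof -
  define \<mu> where "\<mu> = measure_pmf.expectation (P t s a) V"
  define \<sigma> where "\<sigma> = measure_pmf.expectation (P t s a) (\<lambda>z. (V z - \<mu>)\<^sup>2)"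
  define dd where "dd = occ init mu P H t s a"
  define J where "J = {i\<in>{..<m}. st (D i) t = s \<and> act (D i) t = a}"
  define n where "n = visits D m t s a"
  define x where "x = (\<lambda>i. V (nxt (D i) t))"
  have nJ: "n = card J" by (simp add: n_def J_def visits_def)
  have finJ: "finite J" by (simp add: J_def)
  have sV: "sigmaV P t V s a = \<sigma>" by (simp add: sigmaV_def \<sigma>_def \<mu>_def)
  have \<mu>0: "0 \<le> \<mu>" and \<mu>H: "\<mu> \<le> real H" using popoviciu(2,3)[OF V0 VH, of "P t s a"] by (auto simp: \<mu>_def)
  have \<sigma>0: "0 \<le> \<sigma>" unfolding \<sigma>_def by (rule integral_nonneg_AE) simp
  have H0: "0 \<le> real H" using V0 VH order_trans by blast
  have \<sigma>H: "\<sigma> \<le> (real H)\<^sup>2 / 4" using popoviciu(1)[OF V0 VH, of "P t s a"] by (simp add: \<sigma>_def \<mu>_def)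
  have rhs0: "0 \<le> 6 * (real H)\<^sup>2 * sqrt (L / (real m * dd)) + 4 * (real H)\<^sup>2 * L / (real m * dd)"
    using L d by (simp add: dd_def)
  show ?thesis
  proof (cases "real n \<ge> 1/2 * real m * dd \<and> n > 0")
    case False
    then have "sigma_tilde init mu P H D m t V s a = sigmaV P t V s a"
      unfolding sigma_tilde_def Let_def n_def[symmetric] dd_def[symmetric] by (subst if_not_P[OF False]) (rule refl)
    then show ?thesis using rhs0 by (simp add: dd_def)
  next
    case True
    then have n0: "0 < n" and nu: "real m * dd / 2 \<le> real n" by auto
    have "J \<subseteq> {..<m}" by (auto simp: J_def)
    then have "0 < m" using n0 nJ by (metis card.empty lessThan_0 not_gr_zero subset_empty)
    then have u: "0 < real m * dd" using d by (simp add: dd_def)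
    have st: "sigma_tilde init mu P H D m t V s a
        = (\<Sum>i\<in>J. (x i)\<^sup>2) / real n - ((\<Sum>i\<in>J. x i) / real n)\<^sup>2"
      unfolding sigma_tilde_def Let_def n_def[symmetric] dd_def[symmetric] J_def[symmetric] x_def
      by (subst if_P[OF True]) (rule refl)
    define S1 where "S1 = (\<Sum>i\<in>J. x i - \<mu>)"
    define S2 where "S2 = (\<Sum>i\<in>J. (x i - \<mu>)\<^sup>2 - \<sigma>)"
    have S1e: "(\<Sum>i<m. phi t s a V \<mu> (D i)) = S1"
      unfolding S1_def J_def phi_def x_def by (rule sum.inter_filter[symmetric]) simp
    have S2e: "(\<Sum>i<m. phi t s a (\<lambda>z. (V z - \<mu>)\<^sup>2) \<sigma> (D i)) = S2"
      unfolding S2_def J_def phi_def x_def by (rule sum.inter_filter[symmetric]) simp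
    have xb: "\<bar>x i - \<mu>\<bar> \<le> real H" for i using V0[of "nxt (D i) t"] VH[of "nxt (D i) t"] \<mu>0 \<mu>H
      by (simp add: x_def abs_le_iff)
    have xb2: "\<bar>(x i - \<mu>)\<^sup>2 - \<sigma>\<bar> \<le> (real H)\<^sup>2" for i
    proof -
      have "(x i - \<mu>)\<^sup>2 \<le> (real H)\<^sup>2" using xb[of i] by (metis abs_ge_zero power2_abs power_mono)
      moreover have "\<sigma> \<le> (real H)\<^sup>2" using \<sigma>H \<sigma>0 by simp
      moreover have "0 \<le> (x i - \<mu>)\<^sup>2" by simp
      ultimately show ?thesis using \<sigma>0 unfolding abs_le_iff by linarith
    qed
    have B1: "\<bar>S1\<bar> \<le> real n * real H"
    proof -
      have "\<bar>S1\<bar> \<le> (\<Sum>i\<in>J. \<bar>x i - \<mu>\<bar>)" unfolding S1_def by (rule sum_abs)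
      also have "\<dots> \<le> (\<Sum>i\<in>J. real H)" by (rule sum_mono) (rule xb)
      finally show ?thesis by (simp add: nJ)
    qed
    have B2: "\<bar>S2\<bar> \<le> real n * (real H)\<^sup>2"
    proof -
      have "\<bar>S2\<bar> \<le> (\<Sum>i\<in>J. \<bar>(x i - \<mu>)\<^sup>2 - \<sigma>\<bar>)" unfolding S2_def by (rule sum_abs)
      also have "\<dots> \<le> (\<Sum>i\<in>J. (real H)\<^sup>2)" by (rule sum_mono) (rule xb2)
      finally show ?thesis by (simp add: nJ)
    qed
    have H2: "0 \<le> (real H)\<^sup>2" by simp
    have b1': "\<not> (real H * sqrt (real m * dd * L) + 2 * real H * L \<le> \<bar>S1\<bar>)"
      using b1 unfolding \<mu>_def[symmetric] dd_def[symmetric] S1e sqrt_fac[OF H0] .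
    have b2': "\<not> ((real H)\<^sup>2 * sqrt (real m * dd * L) + 2 * (real H)\<^sup>2 * L \<le> \<bar>S2\<bar>)"
      using b2 unfolding \<mu>_def[symmetric] \<sigma>_def[symmetric] dd_def[symmetric] S2e sqrt_fac[OF H2] .
    have E1: "\<bar>S1\<bar> \<le> real H * sqrt (real m * dd * L) + 2 * real H * L" using b1' by linarith
    have E2: "\<bar>S2\<bar> \<le> (real H)\<^sup>2 * sqrt (real m * dd * L) + 2 * (real H)\<^sup>2 * L" using b2' by linarith
    have fa: "\<bar>S2 / real n - (S1 / real n)\<^sup>2\<bar>
        \<le> 6 * (real H)\<^sup>2 * sqrt (L / (real m * dd)) + 4 * (real H)\<^sup>2 * L / (real m * dd)"
      by (rule final_arith[OF u _ _ H0 _ B1 B2]) (use n0 nu L E1 E2 in \<open>auto simp: mult.commute\<close>)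
    have sx1: "S1 = (\<Sum>i\<in>J. x i) - real n * \<mu>" by (simp add: S1_def sum_subtractf nJ)
    have sx2: "S2 = (\<Sum>i\<in>J. (x i)\<^sup>2) - 2 * \<mu> * (\<Sum>i\<in>J. x i) + real n * \<mu>\<^sup>2 - real n * \<sigma>"
    proof -
      have "S2 = (\<Sum>i\<in>J. (x i)\<^sup>2 - 2 * \<mu> * x i + \<mu>\<^sup>2 - \<sigma>)"
        unfolding S2_def by (rule sum.cong) (auto simp: power2_eq_square algebra_simps)
      also have "\<dots> = (\<Sum>i\<in>J. (x i)\<^sup>2) - 2 * \<mu> * (\<Sum>i\<in>J. x i) + real n * \<mu>\<^sup>2 - real n * \<sigma>"
        by (simp add: sum_subtractf sum.distrib sum_distrib_left nJ)
      finally show ?thesis .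
    qed
    have eq: "sigma_tilde init mu P H D m t V s a - sigmaV P t V s a = S2 / real n - (S1 / real n)\<^sup>2"
      unfolding st sV sx1 sx2 using n0 by (simp add: field_simps power2_eq_square)
    show ?thesis unfolding eq using fa by (simp add: dd_def)
  qed
qed

theorem lemmaB3:
  fixes init :: "'s::finite pmf"
    and mu :: "nat \<Rightarrow> 's \<Rightarrow> 'a::finite pmf"
    and P :: "nat \<Rightarrow> 's \<Rightarrow> 'a \<Rightarrow> 's pmf"
    and H m :: nat
    and Vin :: "nat \<Rightarrow> 's \<Rightarrow> real"
    and \<delta> :: real
  assumes "0 < \<delta>" and "\<delta> < 1"
    and "\<forall>t\<in>{1..H}. \<forall>s. 0 \<le> Vin (t + 1) s \<and> Vin (t + 1) s \<le> real H"
  shows "measure_pmf.prob (dataset_pmf init mu P H m)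
           {D. \<forall>t\<in>{1..H}. \<forall>s a. occ init mu P H t s a > 0 \<longrightarrow>
              \<bar>sigma_tilde init mu P H D m t (Vin (t + 1)) s a - sigmaV P t (Vin (t + 1)) s a\<bar>
                \<le> 6 * (real H)\<^sup>2 * sqrt (ln (4 * real H * real CARD('s) * real CARD('a) / \<delta>)
                                        / (real m * occ init mu P H t s a))
                  + 4 * (real H)\<^sup>2 * ln (4 * real H * real CARD('s) * real CARD('a) / \<delta>)
                                        / (real m * occ init mu P H t s a)}
         \<ge> 1 - \<delta>"
  (is "measure_pmf.prob ?M ?G \<ge> _")
proof (cases "H = 0")
  case True
  then have "?G = UNIV" by simp
  then show ?thesis using assms by simp
next
  case False
  then have H: "0 < H" by simp
  have d0: "0 < \<delta>" "\<delta> < 1" using assms by auto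
  have Vb: "\<And>t z. t \<in> {1..H} \<Longrightarrow> 0 \<le> Vin (t + 1) z" "\<And>t z. t \<in> {1..H} \<Longrightarrow> Vin (t + 1) z \<le> real H"
    using assms(3) by auto
  define K where "K = 4 * real H * real CARD('s) * real CARD('a)"
  have K4: "4 \<le> K"
  proof -
    have "1 \<le> real H" "1 \<le> real CARD('s)" "1 \<le> real CARD('a)" using H by auto
    then have "1 \<le> real H * real CARD('s) * real CARD('a)" by (metis mult_ge1_I)
    then show ?thesis by (simp add: K_def)
  qed
  define L where "L = ln (K / \<delta>)"
  have Kd: "1 < K / \<delta>" using K4 d0 by (simp add: field_simps)
  have L: "0 < L" using Kd by (simp add: L_def)
  have eL: "exp (- L) = \<delta> / K" using Kd d0 K4 by (simp add: L_def exp_minus exp_ln)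
  define T where "T = {1..H} \<times> (UNIV :: 's set) \<times> (UNIV :: 'a set)"
  define Bad where "Bad = (\<lambda>(t, s, a).
     {D. 2 * sqrt (real m * (occ init mu P H t s a * (real H)\<^sup>2 / 4) * L) + 2 * real H * L
          \<le> \<bar>\<Sum>i<m. phi t s a (Vin (t + 1)) (measure_pmf.expectation (P t s a) (Vin (t + 1))) (D i)\<bar>}
   \<union> {D. 2 * sqrt (real m * (occ init mu P H t s a * ((real H)\<^sup>2)\<^sup>2 / 4) * L) + 2 * (real H)\<^sup>2 * L
          \<le> \<bar>\<Sum>i<m. phi t s a (\<lambda>z. (Vin (t + 1) z - measure_pmf.expectation (P t s a) (Vin (t + 1)))\<^sup>2)
                 (measure_pmf.expectation (P t s a) (\<lambda>z. (Vin (t + 1) z - measure_pmf.expectation (P t s a) (Vin (t + 1)))\<^sup>2)) (D i)\<bar>})"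
  have pB: "measure_pmf.prob ?M (Bad x) \<le> 4 * exp (- L)" if x: "x \<in> T" for x
  proof -
    obtain t s a where xe: "x = (t, s, a)" by (cases x) auto
    have t: "t \<in> {1..H}" using x by (simp add: T_def xe)
    define \<mu> where "\<mu> = measure_pmf.expectation (P t s a) (Vin (t + 1))"
    have \<mu>0: "0 \<le> \<mu>" and \<mu>H: "\<mu> \<le> real H" using popoviciu(2,3)[OF Vb(1)[OF t] Vb(2)[OF t], of "P t s a"]
      by (auto simp: \<mu>_def)
    have g0: "0 \<le> (Vin (t + 1) z - \<mu>)\<^sup>2" for z by simp
    have gB: "(Vin (t + 1) z - \<mu>)\<^sup>2 \<le> (real H)\<^sup>2" for z
    proof -
      have "\<bar>Vin (t + 1) z - \<mu>\<bar> \<le> real H" using Vb[OF t, of z] Vb(2)[OF t, of z] \<mu>0 \<mu>H by (simp add: abs_le_iff)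
      then show ?thesis by (metis abs_ge_zero power2_abs power_mono)
    qed
    have HB: "0 < real H" "0 < (real H)\<^sup>2" using H by auto
    note p1 = tail2[OF t Vb(1)[OF t] Vb(2)[OF t] HB(1) L, where s=s and a=a and P=P and init=init and mu=mu and m=m]
    note p2 = tail2[OF t g0 gB HB(2) L, where s=s and a=a and P=P and init=init and mu=mu and m=m, unfolded \<mu>_def]
    have "measure_pmf.prob ?M (Bad x) \<le> 2 * exp (- L) + 2 * exp (- L)"
      unfolding xe Bad_def prod.case
      by (rule order_trans[OF measure_Un_le add_mono[OF p1 p2]]) simp_all
    then show ?thesis by simp
  qed
  have finT: "finite T" by (simp add: T_def)
  have cardT: "real (card T) = real H * real CARD('s) * real CARD('a)"
    by (simp add: T_def card_cartesian_product)
  have sub: "UNIV - (\<Union>x\<in>T. Bad x) \<subseteq> ?G"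
  proof
    fix D assume "D \<in> UNIV - (\<Union>x\<in>T. Bad x)"
    then have nb: "\<forall>x\<in>T. D \<notin> Bad x" by blast
    show "D \<in> ?G"
    proof (simp only: mem_Collect_eq, intro ballI allI impI)
      fix t s a assume t': "t \<in> {1..H}" and d: "0 < occ init mu P H t s a"
      have "D \<notin> Bad (t, s, a)" using nb t' by (auto simp: T_def)
      then have nb1: "\<not> (2 * sqrt (real m * (occ init mu P H t s a * (real H)\<^sup>2 / 4) * L) + 2 * real H * L
            \<le> \<bar>\<Sum>i<m. phi t s a (Vin (t + 1)) (measure_pmf.expectation (P t s a) (Vin (t + 1))) (D i)\<bar>)"
        and nb2: "\<not> (2 * sqrt (real m * (occ init mu P H t s a * ((real H)\<^sup>2)\<^sup>2 / 4) * L) + 2 * (real H)\<^sup>2 * L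
            \<le> \<bar>\<Sum>i<m. phi t s a (\<lambda>z. (Vin (t + 1) z - measure_pmf.expectation (P t s a) (Vin (t + 1)))\<^sup>2)
                   (measure_pmf.expectation (P t s a) (\<lambda>z. (Vin (t + 1) z - measure_pmf.expectation (P t s a) (Vin (t + 1)))\<^sup>2)) (D i)\<bar>)"
        unfolding Bad_def prod.case by auto
      show "\<bar>sigma_tilde init mu P H D m t (Vin (t + 1)) s a - sigmaV P t (Vin (t + 1)) s a\<bar>
         \<le> 6 * (real H)\<^sup>2 * sqrt (ln (4 * real H * real CARD('s) * real CARD('a) / \<delta>) / (real m * occ init mu P H t s a)) +
            4 * (real H)\<^sup>2 * ln (4 * real H * real CARD('s) * real CARD('a) / \<delta>) / (real m * occ init mu P H t s a)"
        using determ[OF Vb(1)[OF t'] Vb(2)[OF t'] L d nb1 nb2] by (simp only: L_def K_def)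
    qed
  qed
  have "1 - \<delta> = 1 - real (card T) * (4 * exp (- L))"
    using K4 H by (simp add: eL cardT K_def)
  also have "\<dots> \<le> 1 - (\<Sum>x\<in>T. measure_pmf.prob ?M (Bad x))"
    using sum_bounded_above[of T "\<lambda>x. measure_pmf.prob ?M (Bad x)" "4 * exp (- L)"] pB by simp
  also have "\<dots> \<le> 1 - measure_pmf.prob ?M (\<Union>x\<in>T. Bad x)"
    using measure_UNION_le[OF finT, where F=Bad and M="measure_pmf ?M"] by simp
  also have "\<dots> = measure_pmf.prob ?M (UNIV - (\<Union>x\<in>T. Bad x))"
    using measure_pmf.prob_compl[of "\<Union>x\<in>T. Bad x" ?M] by simp
  also have "\<dots> \<le> measure_pmf.prob ?M ?G"
    by (rule measure_pmf.finite_measure_mono[OF sub]) simp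
  finally show ?thesis .
qed

end
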